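(* Let $\{(x_i,y_i)\}_{i=1}^n\subset\mathbb{R}^d\times\{\pm1\}$ be linearly separable (there is $w^*$ with $\mathrm{sign}(\langle w^*,x_i\rangle)=y_i$ for all $i$), and let $L(w)=\frac1n\sum_{i=1}^n\ell(y_i\langle w,x_i\rangle)$ with $\ell$ differentiable, decreasing, convex, not attaining its minimum, and $\inf\ell=0$. Let $\psi$ be a differentiable strictly convex potential on $\mathbb{R}^d$ for which mirror descent $\nabla\psi(w_{t+1})=\nabla\psi(w_t)-\eta\nabla L(w_t)$ is well defined. If $\eta$ is small enough that $\psi-\eta L$ is convex, then $L(w_t)\to0$ as $t\to\infty$, and hence $\lim_{t\to\infty}\|w_t\|=\infty$ for any norm $\|\cdot\|$ on $\mathbb{R}^d$. *)

theory Defs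
  imports "HOL-Analysis.Analysis"
begin

definition strict_convex_on :: "'a::real_vector set \<Rightarrow> ('a \<Rightarrow> real) \<Rightarrow> bool" where
  "strict_convex_on S f \<longleftrightarrow>
     (\<forall>x\<in>S. \<forall>y\<in>S. x \<noteq> y \<longrightarrow> (\<forall>u::real. 0 < u \<and> u < 1 \<longrightarrow>
        f ((1 - u) *\<^sub>R x + u *\<^sub>R y) < (1 - u) * f x + u * f y))"

definition emp_loss :: "nat \<Rightarrow> (nat \<Rightarrow> 'a::real_inner) \<Rightarrow> (nat \<Rightarrow> real) \<Rightarrow> (real \<Rightarrow> real) \<Rightarrow> 'a \<Rightarrow> real" where
  "emp_loss n x y l w = (1 / real n) * (\<Sum>i<n. l (y i * (w \<bullet> x i)))"

definition is_norm :: "('a::real_vector \<Rightarrow> real) \<Rightarrow> bool" where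
  "is_norm N \<longleftrightarrow> (\<forall>v. 0 \<le> N v) \<and> (\<forall>v. N v = 0 \<longleftrightarrow> v = 0)
     \<and> (\<forall>c v. N (c *\<^sub>R v) = \<bar>c\<bar> * N v) \<and> (\<forall>u v. N (u + v) \<le> N u + N v)"

end

theory Submission
  imports Defs
begin


lemma tangent_ineq:
  fixes f :: "'a::real_inner \<Rightarrow> real"
  assumes cv: "convex_on UNIV f" and d: "(f has_derivative (\<lambda>h. g \<bullet> h)) (at v)"
  shows "f v + g \<bullet> (u - v) \<le> f u"
proof -
  define G where "G = (\<lambda>s::real. f (v + s *\<^sub>R (u - v)))"
  have cG: "convex_on UNIV G"
  proof (rule convex_onI)
    fix t a b :: real assume t: "0 < t" "t < 1"
    have "v + ((1 - t) *\<^sub>R a + t *\<^sub>R b) *\<^sub>R (u - v) = (1 - t) *\<^sub>R (v + a *\<^sub>R (u - v)) + t *\<^sub>R (v + b *\<^sub>R (u - v))"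
      by (simp add: algebra_simps)
    then show "G ((1 - t) *\<^sub>R a + t *\<^sub>R b) \<le> (1 - t) * G a + t * G b"
      unfolding G_def using convex_onD[OF cv, of t] t by simp
  qed simp
  have d1: "((\<lambda>s::real. v + s *\<^sub>R (u - v)) has_derivative (\<lambda>s. s *\<^sub>R (u - v))) (at 0)"
    by (auto intro!: derivative_eq_intros)
  have d2: "(f has_derivative (\<lambda>h. g \<bullet> h)) (at (v + 0 *\<^sub>R (u - v)))" using d by simp
  have "(G has_derivative (\<lambda>s. g \<bullet> (s *\<^sub>R (u - v)))) (at 0)"
    unfolding G_def using has_derivative_compose[OF d1 d2] by (simp add: o_def)
  then have "(G has_field_derivative (g \<bullet> (u - v))) (at 0)"
    unfolding has_field_derivative_def
    by (rule has_derivative_eq_rhs) (auto simp: fun_eq_iff)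
  then have "G 1 - G 0 \<ge> (g \<bullet> (u - v)) * (1 - 0)"
    by (intro convex_on_imp_above_tangent[OF cG]) auto
  then show ?thesis unfolding G_def by simp
qed

lemma strict_imp_convex: "strict_convex_on UNIV (f::'a::real_vector \<Rightarrow> real) \<Longrightarrow> convex_on UNIV f"
  unfolding strict_convex_on_def
proof (intro convex_onI)
  fix t :: real and a b :: 'a
  assume h: "\<forall>x\<in>UNIV. \<forall>y\<in>UNIV. x \<noteq> y \<longrightarrow> (\<forall>u. 0 < u \<and> u < 1 \<longrightarrow> f ((1 - u) *\<^sub>R x + u *\<^sub>R y) < (1 - u) * f x + u * f y)"
    and t: "0 < t" "t < 1"
  show "f ((1 - t) *\<^sub>R a + t *\<^sub>R b) \<le> (1 - t) * f a + t * f b"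
  proof (cases "a = b")
    case True then show ?thesis by (simp add: algebra_simps)
  next
    case False then show ?thesis using h t by (meson UNIV_I less_imp_le)
  qed
qed simp

lemma emp_loss_convex:
  assumes "convex_on UNIV l"
  shows "convex_on UNIV (emp_loss n (x::nat \<Rightarrow> 'a::real_inner) y l)"
proof (rule convex_onI)
  fix t :: real and a b :: 'a assume t: "0 < t" "t < 1"
  have "\<And>i. l (y i * (((1 - t) *\<^sub>R a + t *\<^sub>R b) \<bullet> x i)) \<le> (1 - t) * l (y i * (a \<bullet> x i)) + t * l (y i * (b \<bullet> x i))"
  proof -
    fix i
    have "y i * (((1 - t) *\<^sub>R a + t *\<^sub>R b) \<bullet> x i) = (1 - t) *\<^sub>R (y i * (a \<bullet> x i)) + t *\<^sub>R (y i * (b \<bullet> x i))"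
      by (simp add: algebra_simps inner_add_left)
    then show "l (y i * (((1 - t) *\<^sub>R a + t *\<^sub>R b) \<bullet> x i)) \<le> (1 - t) * l (y i * (a \<bullet> x i)) + t * l (y i * (b \<bullet> x i))"
      using convex_onD[OF assms, of t] t by simp
  qed
  then have "(\<Sum>i<n. l (y i * (((1 - t) *\<^sub>R a + t *\<^sub>R b) \<bullet> x i))) \<le> (\<Sum>i<n. (1 - t) * l (y i * (a \<bullet> x i)) + t * l (y i * (b \<bullet> x i)))"
    by (rule sum_mono)
  also have "\<dots> = (1 - t) * (\<Sum>i<n. l (y i * (a \<bullet> x i))) + t * (\<Sum>i<n. l (y i * (b \<bullet> x i)))"
    by (simp add: sum.distrib sum_distrib_left)
  finally have "(1 / real n) * (\<Sum>i<n. l (y i * (((1 - t) *\<^sub>R a + t *\<^sub>R b) \<bullet> x i))) \<le> (1 / real n) * ((1 - t) * (\<Sum>i<n. l (y i * (a \<bullet> x i))) + t * (\<Sum>i<n. l (y i * (b \<bullet> x i))))"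
    by (rule mult_left_mono) simp
  also have "\<dots> = (1 - t) * ((1 / real n) * (\<Sum>i<n. l (y i * (a \<bullet> x i)))) + t * ((1 / real n) * (\<Sum>i<n. l (y i * (b \<bullet> x i))))"
    by (simp add: algebra_simps add_divide_distrib[symmetric] diff_divide_distrib[symmetric])
  finally show "emp_loss n x y l ((1 - t) *\<^sub>R a + t *\<^sub>R b) \<le> (1 - t) * emp_loss n x y l a + t * emp_loss n x y l b"
    unfolding emp_loss_def .
qed simp



lemma md_core:
  fixes L psi :: "'a::real_inner \<Rightarrow> real" and gp gL :: "'a \<Rightarrow> 'a" and w :: "nat \<Rightarrow> 'a"
  assumes Lc: "convex_on UNIV L" and Lg: "\<forall>v. (L has_derivative (\<lambda>h. gL v \<bullet> h)) (at v)"
    and pc: "convex_on UNIV psi" and pg: "\<forall>v. (psi has_derivative (\<lambda>h. gp v \<bullet> h)) (at v)"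
    and eta: "eta > 0" and Fc: "convex_on UNIV (\<lambda>v. psi v - eta * L v)"
    and mirror: "\<forall>t. gp (w (Suc t)) = gp (w t) - eta *\<^sub>R gL (w t)"
    and Lnn: "\<forall>v. L v \<ge> 0" and good: "\<forall>e>0. \<exists>u. L u < e"
  shows "(\<lambda>t. L (w t)) \<longlonglongrightarrow> 0"
proof -
  define D where "D = (\<lambda>a b. psi a - psi b - gp b \<bullet> (a - b))"
  have Dnn: "D a b \<ge> 0" for a b
    using tangent_ineq[OF pc, of "gp b" b a] pg unfolding D_def by auto
  have Fg: "((\<lambda>v. psi v - eta * L v) has_derivative (\<lambda>h. (gp v - eta *\<^sub>R gL v) \<bullet> h)) (at v)" for v
  proof -
    have "((\<lambda>v. psi v - eta * L v) has_derivative (\<lambda>h. gp v \<bullet> h - eta * (gL v \<bullet> h))) (at v)"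
      using pg Lg by (auto intro!: derivative_eq_intros)
    then show ?thesis by (simp add: inner_diff_left)
  qed
  have mir: "eta *\<^sub>R gL (w t) = gp (w t) - gp (w (Suc t))" for t
    using mirror by simp
  have desc: "eta * L (w (Suc t)) \<le> eta * L (w t) - D (w t) (w (Suc t))" for t
  proof -
    have "psi (w t) - eta * L (w t) + (gp (w t) - eta *\<^sub>R gL (w t)) \<bullet> (w (Suc t) - w t)
          \<le> psi (w (Suc t)) - eta * L (w (Suc t))"
      by (rule tangent_ineq[OF Fc Fg])
    then have "psi (w t) - eta * L (w t) + gp (w (Suc t)) \<bullet> (w (Suc t) - w t)
          \<le> psi (w (Suc t)) - eta * L (w (Suc t))"
      by (simp only: mirror[rule_format, symmetric])
    then show ?thesis unfolding D_def
      by (simp add: inner_diff_left inner_diff_right algebra_simps)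
  qed
  have mono: "L (w (Suc t)) \<le> L (w t)" for t
  proof -
    have "eta * L (w (Suc t)) \<le> eta * L (w t)" using desc[of t] Dnn[of "w t" "w (Suc t)"] by linarith
    then show ?thesis using eta by simp
  qed
  have step: "eta * (L (w (Suc t)) - L u) \<le> D u (w t) - D u (w (Suc t))" for t u
  proof -
    have "L (w t) + gL (w t) \<bullet> (u - w t) \<le> L u"
      by (rule tangent_ineq[OF Lc]) (use Lg in auto)
    then have "eta * L (w t) + (eta *\<^sub>R gL (w t)) \<bullet> (u - w t) \<le> eta * L u"
      using eta by (simp add: algebra_simps) (metis distrib_left mult_left_mono less_imp_le)
    then have "eta * L (w t) + (gp (w t) - gp (w (Suc t))) \<bullet> (u - w t) \<le> eta * L u"
      by (simp add: mir)
    then show ?thesis using desc[of t] unfolding D_def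
      by (simp add: inner_diff_left inner_diff_right algebra_simps)
  qed
  have tele: "eta * real T * (L (w T) - L u) \<le> D u (w 0) - D u (w T)" for T u
  proof (induction T)
    case 0 then show ?case by simp
  next
    case (Suc T)
    have "eta * real T * (L (w (Suc T)) - L u) \<le> eta * real T * (L (w T) - L u)"
      using mono[of T] eta by (intro mult_left_mono) auto
    then show ?case using Suc step[of T u] by (simp add: algebra_simps)
  qed
  show ?thesis
  proof (rule LIMSEQ_I)
    fix e :: real assume e: "e > 0"
    obtain u where u: "L u < e / 2" using good e by (metis half_gt_zero)
    define K where "K = D u (w 0)"
    have K: "K \<ge> 0" unfolding K_def by (rule Dnn)
    obtain N :: nat where N: "real N > 2 * K / (eta * e)" using reals_Archimedean2 by blast
    have "norm (L (w T) - 0) < e" if T: "T \<ge> N" for T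
    proof (rule ccontr)
      assume "\<not> norm (L (w T) - 0) < e"
      then have Le: "L (w T) \<ge> e" using Lnn by simp
      have "real T > 2 * K / (eta * e)" using N T by linarith
      then have "real T * (eta * e) > 2 * K" using eta e by (simp add: field_simps)
      moreover have "eta * real T * (L (w T) - L u) \<le> K"
        using tele[of T u] Dnn[of u "w T"] unfolding K_def by linarith
      moreover have "eta * real T * (e / 2) \<le> eta * real T * (L (w T) - L u)"
        using Le u eta by (intro mult_left_mono) auto
      ultimately show False by (simp add: algebra_simps)
    qed
    then show "\<exists>N. \<forall>T\<ge>N. norm (L (w T) - 0) < e" by blast
  qed
qed



lemma is_norm_sum:
  assumes "is_norm N" "finite S"
  shows "N (\<Sum>i\<in>S. f i) \<le> (\<Sum>i\<in>S. N (f i))"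
  using assms(2)
proof (induction S rule: finite_induct)
  case empty have "N 0 = 0" using assms(1) unfolding is_norm_def by blast then show ?case by simp
next
  case (insert a S)
  then show ?case using assms(1) unfolding is_norm_def
    by (simp add: sum.insert) (smt (verit))
qed

lemma is_norm_lower:
  fixes N :: "'a::euclidean_space \<Rightarrow> real"
  assumes N: "is_norm N"
  shows "\<exists>m>0. \<forall>v. m * norm v \<le> N v"
proof -
  define C where "C = (\<Sum>b\<in>Basis. N b)"
  have up: "N v \<le> C * norm v" for v
  proof -
    have "N v = N (\<Sum>b\<in>Basis. (v \<bullet> b) *\<^sub>R b)" by (simp add: euclidean_representation)
    also have "\<dots> \<le> (\<Sum>b\<in>Basis. N ((v \<bullet> b) *\<^sub>R b))" by (rule is_norm_sum[OF N]) simp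
    also have "\<dots> = (\<Sum>b\<in>Basis. \<bar>v \<bullet> b\<bar> * N b)" using N unfolding is_norm_def by simp
    also have "\<dots> \<le> (\<Sum>b\<in>Basis. norm v * N b)"
      using N unfolding is_norm_def by (intro sum_mono mult_right_mono Basis_le_norm) auto
    also have "\<dots> = C * norm v" unfolding C_def by (simp add: sum_distrib_left mult.commute)
    finally show ?thesis .
  qed
  have C0: "C \<ge> 0" unfolding C_def using N unfolding is_norm_def by (simp add: sum_nonneg)
  have lip: "\<bar>N u - N v\<bar> \<le> C * dist u v" for u v
  proof -
    have "N u \<le> N v + N (u - v)" "N v \<le> N u + N (v - u)"
      using N unfolding is_norm_def by (metis add.commute diff_add_cancel)+
    moreover have "N (v - u) = N (u - v)"
      using N unfolding is_norm_def by (metis abs_minus_cancel abs_one minus_diff_eq mult_1 scaleR_minus1_left)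
    ultimately show ?thesis using up[of "u - v"] by (simp add: dist_norm)
  qed
  have cont: "continuous_on UNIV N"
    unfolding continuous_on_iff
  proof (intro ballI allI impI)
    fix a :: 'a and e :: real assume e: "e > 0"
    show "\<exists>d>0. \<forall>x'\<in>UNIV. dist x' a < d \<longrightarrow> dist (N x') (N a) < e"
    proof (intro exI[of _ "e / (C + 1)"] conjI ballI impI)
      show "e / (C + 1) > 0" using e C0 by simp
      fix z assume "dist z a < e / (C + 1)"
      then have "(C + 1) * dist z a < e" using C0 by (simp add: field_simps)
      moreover have "C * dist z a \<le> (C + 1) * dist z a" by (simp add: algebra_simps)
      ultimately show "dist (N z) (N a) < e" using lip[of z a] by (simp add: dist_real_def)
    qed
  qed
  obtain b :: 'a where b: "b \<in> Basis" using nonempty_Basis by blast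
  have ne: "sphere (0::'a) 1 \<noteq> {}" using b by (auto simp: norm_Basis)
  obtain z where z: "z \<in> sphere 0 1" and zmin: "\<forall>v\<in>sphere 0 1. N z \<le> N v"
    using continuous_attains_inf[OF compact_sphere ne continuous_on_subset[OF cont]] by blast
  have m0: "N z > 0" using z N unfolding is_norm_def by (metis norm_zero order_le_less mem_sphere_0 zero_neq_one)
  have "N z * norm v \<le> N v" for v
  proof (cases "v = 0")
    case True then show ?thesis using N unfolding is_norm_def by simp
  next
    case False
    have "(1 / norm v) *\<^sub>R v \<in> sphere 0 1" using False by simp
    then have "N z \<le> N ((1 / norm v) *\<^sub>R v)" using zmin by blast
    also have "\<dots> = N v / norm v" using N unfolding is_norm_def by simp
    finally show ?thesis using False by (simp add: field_simps)
  qed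
  then show ?thesis using m0 by blast
qed



theorem lemma3:
  fixes n :: nat
    and x :: "nat \<Rightarrow> 'a::euclidean_space"
    and y :: "nat \<Rightarrow> real"
    and l :: "real \<Rightarrow> real"
    and psi :: "'a \<Rightarrow> real"
    and grad_psi :: "'a \<Rightarrow> 'a"
    and grad_L :: "'a \<Rightarrow> 'a"
    and eta :: real
    and w :: "nat \<Rightarrow> 'a"
  assumes n_pos: "n \<ge> 1"
    and labels: "\<forall>i<n. y i \<in> {-1, 1}"
    and separable: "\<exists>wstar. \<forall>i<n. sgn (wstar \<bullet> x i) = y i"
    and l_diff: "\<forall>z. l differentiable (at z)"
    and l_decr: "antimono l"
    and l_convex: "convex_on UNIV l"
    and l_no_min: "\<forall>z. \<exists>z'. l z' < l z"
    and l_inf: "bdd_below (range l)" "(INF z. l z) = 0"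
    and psi_grad: "\<forall>v. (psi has_derivative (\<lambda>h. grad_psi v \<bullet> h)) (at v)"
    and psi_strict: "strict_convex_on UNIV psi"
    and L_grad: "\<forall>v. (emp_loss n x y l has_derivative (\<lambda>h. grad_L v \<bullet> h)) (at v)"
    and eta_pos: "eta > 0"
    and eta_small: "convex_on UNIV (\<lambda>v. psi v - eta * emp_loss n x y l v)"
    and mirror: "\<forall>t. grad_psi (w (Suc t)) = grad_psi (w t) - eta *\<^sub>R grad_L (w t)"
  shows "(\<lambda>t. emp_loss n x y l (w t)) \<longlonglongrightarrow> 0
    \<and> (\<forall>N. is_norm N \<longrightarrow> filterlim (\<lambda>t. N (w t)) at_top sequentially)"
proof -
  let ?L = "emp_loss n x y l"
  have lnn: "l z \<ge> 0" for z using cINF_lower[OF l_inf(1), of z] l_inf(2) by simp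
  have lpos: "l z > 0" for z using l_no_min lnn by (meson le_less_trans)
  have Lnn: "\<forall>v. ?L v \<ge> 0" unfolding emp_loss_def by (auto intro!: divide_nonneg_nonneg sum_nonneg lnn)
  obtain ws where ws: "\<forall>i<n. sgn (ws \<bullet> x i) = y i" using separable by blast
  have apos: "y i * (ws \<bullet> x i) > 0" if "i < n" for i
  proof -
    have s: "sgn (ws \<bullet> x i) = y i" using ws that by blast
    show ?thesis using s labels that by (auto simp: sgn_if mult_neg_neg split: if_splits)
  qed
  define m where "m = Min ((\<lambda>i. y i * (ws \<bullet> x i)) ` {..<n})"
  have ne: "{..<n} \<noteq> {}" using n_pos by (simp add: lessThan_empty_iff)
  have m0: "m > 0" unfolding m_def using apos ne by (subst Min_gr_iff) auto
  have mle: "m \<le> y i * (ws \<bullet> x i)" if "i < n" for i unfolding m_def using that by simp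
  have good: "\<forall>e>0. \<exists>u. ?L u < e"
  proof (intro allI impI)
    fix e :: real assume e: "e > 0"
    have "\<exists>z. l z < e" using cINF_less_iff[OF UNIV_not_empty l_inf(1), of e] l_inf(2) e by simp
    then obtain z0 where z0: "l z0 < e" by blast
    define c where "c = \<bar>z0\<bar> / m"
    have c0: "c \<ge> 0" unfolding c_def using m0 by simp
    have "l (y i * ((c *\<^sub>R ws) \<bullet> x i)) \<le> l z0" if "i < n" for i
    proof -
      have "c * m \<le> c * (y i * (ws \<bullet> x i))" using mle[OF that] c0 by (rule mult_left_mono)
      moreover have "c * m = \<bar>z0\<bar>" unfolding c_def using m0 by simp
      moreover have "y i * ((c *\<^sub>R ws) \<bullet> x i) = c * (y i * (ws \<bullet> x i))" by simp
      moreover have "z0 \<le> \<bar>z0\<bar>" by simp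
      ultimately have "z0 \<le> y i * ((c *\<^sub>R ws) \<bullet> x i)" by linarith
      then show ?thesis using l_decr by (simp add: antimono_def)
    qed
    then have "(\<Sum>i<n. l (y i * ((c *\<^sub>R ws) \<bullet> x i))) \<le> (\<Sum>i<n. l z0)" by (intro sum_mono) auto
    then have "?L (c *\<^sub>R ws) \<le> (1 / real n) * (real n * l z0)" unfolding emp_loss_def
      by (intro mult_left_mono) auto
    also have "\<dots> = l z0" using n_pos by simp
    finally show "\<exists>u. ?L u < e" using z0 by (intro exI[of _ "c *\<^sub>R ws"]) simp
  qed
  have conv: "(\<lambda>t. ?L (w t)) \<longlonglongrightarrow> 0"
    by (rule md_core[OF emp_loss_convex[OF l_convex] L_grad strict_imp_convex[OF psi_strict]
          psi_grad eta_pos eta_small mirror Lnn good])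
  have lowL: "?L v \<ge> l (norm v * norm (x 0)) / real n" for v
  proof -
    have "y 0 * (v \<bullet> x 0) \<le> \<bar>v \<bullet> x 0\<bar>" using labels n_pos by auto
    also have "\<dots> \<le> norm v * norm (x 0)" by (rule Cauchy_Schwarz_ineq2)
    finally have "l (norm v * norm (x 0)) \<le> l (y 0 * (v \<bullet> x 0))" using l_decr by (simp add: antimono_def)
    also have "\<dots> \<le> (\<Sum>i<n. l (y i * (v \<bullet> x i)))"
      using n_pos by (intro member_le_sum[where f = "\<lambda>i. l (y i * (v \<bullet> x i))"]) (auto intro: lnn)
    finally show ?thesis unfolding emp_loss_def by (simp add: divide_right_mono)
  qed
  have normlim: "filterlim (\<lambda>t. norm (w t)) at_top sequentially"
    unfolding filterlim_at_top
  proof (intro allI)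
    fix Z :: real
    define B where "B = max Z 0"
    define c where "c = l (B * norm (x 0)) / real n"
    have c0: "c > 0" unfolding c_def using lpos n_pos by simp
    have "eventually (\<lambda>t. ?L (w t) < c) sequentially"
      using order_tendstoD(2)[OF conv c0] .
    then show "eventually (\<lambda>t. Z \<le> norm (w t)) sequentially"
    proof (rule eventually_mono)
      fix t assume lt: "?L (w t) < c"
      show "Z \<le> norm (w t)"
      proof (rule ccontr)
        assume "\<not> Z \<le> norm (w t)"
        then have "norm (w t) * norm (x 0) \<le> B * norm (x 0)" unfolding B_def
          by (intro mult_right_mono) auto
        then have "c \<le> l (norm (w t) * norm (x 0)) / real n" unfolding c_def
          using l_decr by (intro divide_right_mono) (auto simp: antimono_def)
        then show False using lowL[of "w t"] lt by linarith
      qed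
    qed
  qed
  have "filterlim (\<lambda>t. N (w t)) at_top sequentially" if N: "is_norm N" for N
  proof -
    obtain m where m: "m > 0" "\<forall>v. m * norm v \<le> N v" using is_norm_lower[OF N] by blast
    have "filterlim (\<lambda>t. m * norm (w t)) at_top sequentially"
      using filterlim_tendsto_pos_mult_at_top[OF tendsto_const m(1) normlim] .
    then show ?thesis
      by (rule filterlim_at_top_mono) (use m(2) in auto)
  qed
  then show ?thesis using conv by blast
qed

end
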